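(* For every $3\le n\le N$, as identities of rational functions of $x$, $$x\nabla\mathbb K_n(x)=\mathscr E_{1,n}(x)K_n(x)+\mathscr F_{1,n}(x)K_{n-1}(x),\qquad x\nabla\mathbb K_{n-1}(x)=\mathscr E_{2,n}(x)K_n(x)+\mathscr F_{2,n}(x)K_{n-1}(x).$$
   Context: Fix an integer $N\ge 1$ and $0<p<1$. Notation: $(a)_0=1$, $(a)_k=a(a+1)\cdots(a+k-1)$ (Pochhammer symbol); $[z]_0=1$, $[z]_k=z(z-1)\cdots(z-k+1)$ (falling factorial). For a function $f$, $\Delta f(x)=f(x+1)-f(x)$, $\nabla f(x)=f(x)-f(x-1)$, $\Delta^0$ is the identity and $\Delta^k=\Delta\circ\Delta^{k-1}$. For $0\le n\le N$ the monic Kravchuk polynomial is $K_n(x)=p^n(-N)_n\sum_{k=0}^{n}\frac{(-n)_k(-x)_k}{(-N)_k\,k!}p^{-k}$, and $K_{-1}=0$; these are monic of degree $n$ and orthogonal on $\{0,\dots,N\}$ with respect to the binomial weight $w(x)=\binom{N}{x}p^x(1-p)^{N-x}$, with $\|K_n\|^2=\sum_{x=0}^N K_n(x)^2w(x)=n!(-N)_np^n(p-1)^n$. They satisfy $xK_n=K_{n+1}+\alpha_nK_n+\beta_nK_{n-1}$ with $\alpha_n=p(N-n)+n(1-p)$, $\beta_n=np(1-p)(N-n+1)$. For $1\le n\le N+1$ and integers $i,l\ge0$, $\mathscr K_{n-1}^{(i,l)}(x,y)=\sum_{k=0}^{n-1}\frac{\Delta^iK_k(x)\,\Delta^lK_k(y)}{\|K_k\|^2}$.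 Fix $\lambda,\mu>0$ and an integer $j\ge 0$. On real polynomials define $\langle f,g\rangle_{\lambda,\mu}=\sum_{x=0}^N f(x)g(x)w(x)+\lambda\Delta^jf(0)\Delta^jg(0)+\mu\Delta^jf(N)\Delta^jg(N)$. For $0\le n\le N$, $\mathbb K_n=\mathbb K_n^{(j)}$ is the monic polynomial of degree $n$ with $\langle\mathbb K_n,q\rangle_{\lambda,\mu}=0$ for all polynomials $q$ of degree $<n$ (Kravchuk–Sobolev polynomials). For $1\le n\le N$: $\mathscr A_n(x,y)=\frac{j!}{\|K_{n-1}\|^2[x-y]_{j+1}}\sum_{k=0}^{j}\frac{\Delta^kK_{n-1}(y)}{k!}[x-y]_k$, $\mathscr B_n(x,y)=-\frac{j!}{\|K_{n-1}\|^2[x-y]_{j+1}}\sum_{k=0}^{j}\frac{\Delta^kK_{n}(y)}{k!}[x-y]_k$; $k_{00}=\mathscr K^{(j,j)}_{n-1}(0,0)$, $k_{0N}=\mathscr K^{(j,j)}_{n-1}(0,N)$, $k_{N0}=\mathscr K^{(j,j)}_{n-1}(N,0)$, $k_{NN}=\mathscr K^{(j,j)}_{n-1}(N,N)$, $d_0=\Delta^jK_n(0)$, $d_N=\Delta^jK_n(N)$, $\delta_n=(1+\lambda k_{00})(1+\mu k_{NN})-\lambda\mu k_{0N}k_{N0}$ (which is nonzero), $\Phi_1(n)=\frac{d_0(1+\mu k_{NN})-\mu k_{0N}d_N}{\delta_n}$, $\Phi_2(n)=\frac{(1+\lambda k_{00})d_N-\lambda k_{N0}d_0}{\delta_n}$;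 $\mathscr C_{1,n}(x)=1-\lambda\Phi_1(n)\mathscr A_n(x,0)-\mu\Phi_2(n)\mathscr A_n(x,N)$ and $\mathscr D_{1,n}(x)=-\lambda\Phi_1(n)\mathscr B_n(x,0)-\mu\Phi_2(n)\mathscr B_n(x,N)$. For $2\le m\le N$ define $\mathscr E_{1,m}(x)=x\nabla\mathscr C_{1,m}(x)+m\,\mathscr C_{1,m}(x-1)-\frac{(m-1)p(N-m+2)\mathscr D_{1,m}(x-1)}{\beta_{m-1}}$ and $\mathscr F_{1,m}(x)=x\nabla\mathscr D_{1,m}(x)+mp(N-m+1)\mathscr C_{1,m}(x-1)+\frac{(m-1)p(N-m+2)(x-\alpha_{m-1})\mathscr D_{1,m}(x-1)}{\beta_{m-1}}+(m-1)\mathscr D_{1,m}(x-1)$. For $3\le n\le N$ define $\mathscr E_{2,n}(x)=-\frac{\mathscr F_{1,n-1}(x)}{\beta_{n-1}}$ and $\mathscr F_{2,n}(x)=\mathscr E_{1,n-1}(x)+\mathscr E_{2,n}(x)(\alpha_{n-1}-x)$. *)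

theory Defs
  imports Complex_Main "HOL-Computational_Algebra.Polynomial"
begin

definition falling :: "real \<Rightarrow> nat \<Rightarrow> real" where
  "falling z k = (\<Prod>i<k. z - real i)"

definition fdiff :: "(real \<Rightarrow> real) \<Rightarrow> real \<Rightarrow> real" where
  "fdiff f = (\<lambda>x. f (x + 1) - f x)"

definition fdiffs :: "nat \<Rightarrow> (real \<Rightarrow> real) \<Rightarrow> real \<Rightarrow> real" where
  "fdiffs i f = (fdiff ^^ i) f"

definition bdiff :: "(real \<Rightarrow> real) \<Rightarrow> real \<Rightarrow> real" where
  "bdiff f x = f x - f (x - 1)"

definition bweight :: "nat \<Rightarrow> real \<Rightarrow> nat \<Rightarrow> real" where
  "bweight N p x = real (N choose x) * p ^ x * (1 - p) ^ (N - x)"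

text \<open>Monic Kravchuk polynomial K_n (as a function of x).\<close>
definition Kraw :: "nat \<Rightarrow> real \<Rightarrow> nat \<Rightarrow> real \<Rightarrow> real" where
  "Kraw N p n x = p ^ n * pochhammer (- real N) n *
     (\<Sum>k\<le>n. pochhammer (- real n) k * pochhammer (- x) k
        / (pochhammer (- real N) k * fact k) * (1 / p ^ k))"

definition Knorm2 :: "nat \<Rightarrow> real \<Rightarrow> nat \<Rightarrow> real" where
  "Knorm2 N p n = (\<Sum>x\<le>N. (Kraw N p n (real x))\<^sup>2 * bweight N p x)"

definition alphaK :: "nat \<Rightarrow> real \<Rightarrow> nat \<Rightarrow> real" where
  "alphaK N p n = p * (real N - real n) + real n * (1 - p)"

definition betaK :: "nat \<Rightarrow> real \<Rightarrow> nat \<Rightarrow> real" where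
  "betaK N p n = real n * p * (1 - p) * (real N - real n + 1)"

text \<open>Kernel: kern N p n i l x y = script-K_{n-1}^{(i,l)}(x,y).\<close>
definition kern :: "nat \<Rightarrow> real \<Rightarrow> nat \<Rightarrow> nat \<Rightarrow> nat \<Rightarrow> real \<Rightarrow> real \<Rightarrow> real" where
  "kern N p n i l x y = (\<Sum>k<n. fdiffs i (Kraw N p k) x * fdiffs l (Kraw N p k) y / Knorm2 N p k)"

definition sip :: "nat \<Rightarrow> real \<Rightarrow> real \<Rightarrow> real \<Rightarrow> nat \<Rightarrow> real poly \<Rightarrow> real poly \<Rightarrow> real" where
  "sip N p lam mu j f g =
     (\<Sum>x\<le>N. poly f (real x) * poly g (real x) * bweight N p x)
     + lam * fdiffs j (poly f) 0 * fdiffs j (poly g) 0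
     + mu * fdiffs j (poly f) (real N) * fdiffs j (poly g) (real N)"

definition SobK :: "nat \<Rightarrow> real \<Rightarrow> real \<Rightarrow> real \<Rightarrow> nat \<Rightarrow> nat \<Rightarrow> real poly" where
  "SobK N p lam mu j n = (THE q. degree q = n \<and> lead_coeff q = 1 \<and>
      (\<forall>r. degree r < n \<longrightarrow> sip N p lam mu j q r = 0))"

definition Acal :: "nat \<Rightarrow> real \<Rightarrow> nat \<Rightarrow> nat \<Rightarrow> real \<Rightarrow> real \<Rightarrow> real" where
  "Acal N p j n x y = fact j / (Knorm2 N p (n - 1) * falling (x - y) (j + 1)) *
     (\<Sum>k\<le>j. fdiffs k (Kraw N p (n - 1)) y / fact k * falling (x - y) k)"

definition Bcal :: "nat \<Rightarrow> real \<Rightarrow> nat \<Rightarrow> nat \<Rightarrow> real \<Rightarrow> real \<Rightarrow> real" where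
  "Bcal N p j n x y = - (fact j / (Knorm2 N p (n - 1) * falling (x - y) (j + 1)) *
     (\<Sum>k\<le>j. fdiffs k (Kraw N p n) y / fact k * falling (x - y) k))"

definition deltaS :: "nat \<Rightarrow> real \<Rightarrow> real \<Rightarrow> real \<Rightarrow> nat \<Rightarrow> nat \<Rightarrow> real" where
  "deltaS N p lam mu j n =
     (1 + lam * kern N p n j j 0 0) * (1 + mu * kern N p n j j (real N) (real N))
     - lam * mu * kern N p n j j 0 (real N) * kern N p n j j (real N) 0"

definition Phi1 :: "nat \<Rightarrow> real \<Rightarrow> real \<Rightarrow> real \<Rightarrow> nat \<Rightarrow> nat \<Rightarrow> real" where
  "Phi1 N p lam mu j n =
     (fdiffs j (Kraw N p n) 0 * (1 + mu * kern N p n j j (real N) (real N))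
      - mu * kern N p n j j 0 (real N) * fdiffs j (Kraw N p n) (real N))
     / deltaS N p lam mu j n"

definition Phi2 :: "nat \<Rightarrow> real \<Rightarrow> real \<Rightarrow> real \<Rightarrow> nat \<Rightarrow> nat \<Rightarrow> real" where
  "Phi2 N p lam mu j n =
     ((1 + lam * kern N p n j j 0 0) * fdiffs j (Kraw N p n) (real N)
      - lam * kern N p n j j (real N) 0 * fdiffs j (Kraw N p n) 0)
     / deltaS N p lam mu j n"

definition C1 :: "nat \<Rightarrow> real \<Rightarrow> real \<Rightarrow> real \<Rightarrow> nat \<Rightarrow> nat \<Rightarrow> real \<Rightarrow> real" where
  "C1 N p lam mu j n x = 1 - lam * Phi1 N p lam mu j n * Acal N p j n x 0
      - mu * Phi2 N p lam mu j n * Acal N p j n x (real N)"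

definition D1 :: "nat \<Rightarrow> real \<Rightarrow> real \<Rightarrow> real \<Rightarrow> nat \<Rightarrow> nat \<Rightarrow> real \<Rightarrow> real" where
  "D1 N p lam mu j n x = - lam * Phi1 N p lam mu j n * Bcal N p j n x 0
      - mu * Phi2 N p lam mu j n * Bcal N p j n x (real N)"

definition E1 :: "nat \<Rightarrow> real \<Rightarrow> real \<Rightarrow> real \<Rightarrow> nat \<Rightarrow> nat \<Rightarrow> real \<Rightarrow> real" where
  "E1 N p lam mu j m x = x * bdiff (C1 N p lam mu j m) x + real m * C1 N p lam mu j m (x - 1)
     - (real m - 1) * p * (real N - real m + 2) * D1 N p lam mu j m (x - 1) / betaK N p (m - 1)"

definition F1 :: "nat \<Rightarrow> real \<Rightarrow> real \<Rightarrow> real \<Rightarrow> nat \<Rightarrow> nat \<Rightarrow> real \<Rightarrow> real" where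
  "F1 N p lam mu j m x = x * bdiff (D1 N p lam mu j m) x
     + real m * p * (real N - real m + 1) * C1 N p lam mu j m (x - 1)
     + (real m - 1) * p * (real N - real m + 2) * (x - alphaK N p (m - 1)) * D1 N p lam mu j m (x - 1)
         / betaK N p (m - 1)
     + (real m - 1) * D1 N p lam mu j m (x - 1)"

definition E2 :: "nat \<Rightarrow> real \<Rightarrow> real \<Rightarrow> real \<Rightarrow> nat \<Rightarrow> nat \<Rightarrow> real \<Rightarrow> real" where
  "E2 N p lam mu j n x = - F1 N p lam mu j (n - 1) x / betaK N p (n - 1)"

definition F2 :: "nat \<Rightarrow> real \<Rightarrow> real \<Rightarrow> real \<Rightarrow> nat \<Rightarrow> nat \<Rightarrow> real \<Rightarrow> real" where
  "F2 N p lam mu j n x = E1 N p lam mu j (n - 1) x + E2 N p lam mu j n x * (alphaK N p (n - 1) - x)"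

end

theory Submission
  imports Defs "HOL-Analysis.Analysis"
begin

definition Pr :: "nat \<Rightarrow> nat \<Rightarrow> nat \<Rightarrow> real" where
  "Pr N k n = falling (real N - real k) (n - k)"
definition ac :: "nat \<Rightarrow> real \<Rightarrow> nat \<Rightarrow> nat \<Rightarrow> real" where
  "ac N p n k = real (n choose k) * (-p)^(n-k) * Pr N k n"
definition Kf :: "nat \<Rightarrow> real \<Rightarrow> nat \<Rightarrow> real \<Rightarrow> real" where
  "Kf N p n x = (\<Sum>k\<le>n. ac N p n k * falling x k)"

lemma falling_Suc: "falling z (Suc k) = falling z k * (z - real k)"
  by (simp add: falling_def)
lemma falling_Suc': "falling z (Suc k) = z * falling (z - 1) k"
  unfolding falling_def by (subst prod.lessThan_Suc_shift) (simp add: algebra_simps)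
lemma falling_0[simp]: "falling z 0 = 1" by (simp add: falling_def)

lemma poch_neg_falling: "pochhammer (- x) k = (-1)^k * falling (x::real) k"
proof -
  have "x gchoose k = (-1)^k * pochhammer (-x) k / fact k" by (rule gbinomial_pochhammer)
  moreover have "x gchoose k = falling x k / fact k"
    by (simp add: gbinomial_prod_rev falling_def atLeast0LessThan)
  ultimately have "falling x k = (-1)^k * pochhammer (-x) k" by simp
  then show ?thesis by (simp add: power_mult_distrib[symmetric])
qed

lemma poch_neg_nat: "pochhammer (- real n) k = (-1)^k * fact k * real (n choose k)"
proof -
  have "real n gchoose k = (-1)^k * pochhammer (- real n) k / fact k" by (rule gbinomial_pochhammer)
  then have "pochhammer (- real n) k = (-1)^k * fact k * (real n gchoose k)"
    by (simp add: power_mult_distrib[symmetric])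
  then show ?thesis by (simp add: binomial_gbinomial)
qed

lemma aux_alg:
  fixes P F q u t r C X R :: real
  assumes "P \<noteq> 0" "F \<noteq> 0" "q \<noteq> 0" "u*u = 1"
  shows "q*r*(P*(t*R))*(u*F*C*(u*X)/(P*F)*(1/q)) = C*(t*r)*R*X"
proof -
  have "q*r*(P*(t*R))*(u*F*C*(u*X)/(P*F)*(1/q)) = (u*u)*(C*(t*r)*R*X)"
    using assms by (simp add: field_simps)
  then show ?thesis using assms(4) by simp
qed

lemma Kraw_Kf:
  assumes "p \<noteq> 0" "n \<le> N"
  shows "Kraw N p n x = Kf N p n x"
  unfolding Kraw_def Kf_def
proof (subst sum_distrib_left, rule sum.cong[OF refl])
  fix k assume k: "k \<in> {..n}"
  then have kn: "k \<le> n" by simp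
  have nz: "pochhammer (- real N) k \<noteq> 0"
    using kn assms(2) by (auto simp: pochhammer_eq_0_iff)
  have split: "pochhammer (- real N) n = pochhammer (- real N) k * pochhammer (- real N + real k) (n - k)"
    using pochhammer_product'[of "- real N" k "n - k"] kn by simp
  have "pochhammer (- real N + real k) (n - k) = pochhammer (- (real N - real k)) (n - k)" by simp
  also have "\<dots> = (-1)^(n-k) * Pr N k n" unfolding poch_neg_falling Pr_def ..
  finally have P: "pochhammer (- real N + real k) (n - k) = (-1)^(n-k) * Pr N k n" .
  have pp: "p ^ n = p^k * p^(n-k)" using kn by (simp add: power_add[symmetric])
  have m1: "((-1::real)^k)*(-1)^k = 1" by (simp add: power_mult_distrib[symmetric])
  show "p ^ n * pochhammer (- real N) n *
         (pochhammer (- real n) k * pochhammer (- x) k / (pochhammer (- real N) k * fact k) * (1 / p ^ k)) =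
         ac N p n k * falling x k"
    unfolding split P poch_neg_nat[of n k] poch_neg_falling[of x k] ac_def pp power_minus[of p]
    by (rule aux_alg[OF nz _ _ m1]) (use assms(1) in auto)
qed

lemma ac_zero: "n < k \<Longrightarrow> ac N p n k = 0"
  by (simp add: ac_def)

lemma ac_diag[simp]: "ac N p n n = 1"
  by (simp add: ac_def Pr_def)

lemma Pr_Suc: "k \<le> n \<Longrightarrow> Pr N k (Suc n) = Pr N k n * (real N - real n)"
  by (simp add: Pr_def Suc_diff_le falling_Suc of_nat_diff)

lemma Pr_pred: "0 < k \<Longrightarrow> k \<le> Suc n \<Longrightarrow> Pr N (k - 1) (Suc n) = (real N - real k + 1) * Pr N k (Suc n)"
proof -
  assume k: "0 < k" "k \<le> Suc n"
  have "Suc n - (k - 1) = Suc (Suc n - k)" using k by simp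
  then show ?thesis unfolding Pr_def using k
    by (simp add: falling_Suc' of_nat_diff algebra_simps)
qed

lemma R1_coeff:
  assumes "1 \<le> n"
  shows "real k * ac N p n k = real n * ac N p n k + real n * p * (real N - real n + 1) * ac N p (n - 1) k"
proof (cases "n < k")
  case True then show ?thesis by (simp add: ac_zero)
next
  case False
  show ?thesis
  proof (cases "k = n")
    case True then show ?thesis using assms by (simp add: ac_zero)
  next
    case False
    obtain n' where n: "n = Suc n'" using assms by (cases n) auto
    have kn: "k \<le> n'" using False \<open>\<not> n < k\<close> n by simp
    have b: "real (n - k) * real (n choose k) = real n * real (n' choose k)"
      using binomial_absorb_comp[of n k] n by (metis of_nat_mult diff_Suc_1)
    have nk: "real (n - k) = real n - real k" using kn n by (simp add: of_nat_diff)
    have pw: "(-p)^(n-k) = (-p) * (-p)^(n'-k)" using kn n by (simp add: Suc_diff_le)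
    have PS: "Pr N k n = Pr N k n' * (real N - real n')" using Pr_Suc[OF kn] n by simp
    have n1: "n - 1 = n'" using n by simp
    define c where "c = real (n choose k)"
    define c' where "c' = real (n' choose k)"
    define q where "q = (-p)^(n'-k)"
    define P where "P = Pr N k n'"
    have b': "(real n - real k) * c = real n * c'" using b nk c_def c'_def by simp
    have "real k * ac N p n k - (real n * ac N p n k + real n * p * (real N - real n + 1) * ac N p (n - 1) k)
        = p * q * P * (real N - real n') * ((real n - real k) * c - real n * c')"
      unfolding n1 ac_def pw PS c_def[symmetric] c'_def[symmetric] q_def[symmetric] P_def[symmetric]
      using n by (simp add: algebra_simps)
    then show ?thesis using b' by simp
  qed
qed

lemma fin_id:
  fixes c0 c1 c2 c3 p q P0 N k d :: real
  assumes "c2*(d+2) = c1*(k+d+2)" "c3*(d+2) = c1*k" "c1*(d+1) = c0*(k+d+1)" "d + 2 \<noteq> 0"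
  shows "c2 * p^2 * q * P0 * (N - k - d) * ((N - k - d) - 1)
   + (p * (N - k - d) + (k + d + 1) * (1 - p) - p) * (c1 * (-p) * q * P0 * (N - k - d))
   + ((k + d + 1) * p * (1 - p) * (N - k - d)) * (c0 * q * P0)
  = c3 * p^2 * q * (N - k + 1) * P0 * (N - k - d)
    + k * (c1 * (-p) * q * P0 * (N - k - d))"
  using assms by algebra

lemma R2_coeff:
  shows "ac N p (Suc n) k + alphaK N p n * ac N p n k + betaK N p n * ac N p (n - 1) k
       = (if k = 0 then 0 else ac N p n (k - 1)) + real k * ac N p n k"
proof -
  consider "Suc n < k" | "k = Suc n" | "k = n" | "k < n" by linarith
  then show ?thesis
  proof cases
    case 1 then show ?thesis by (simp add: ac_zero)
  next
    case 2 then show ?thesis by (cases n) (simp_all add: ac_zero)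
  next
    case 3
    show ?thesis
    proof (cases n)
      case 0 then show ?thesis using 3
        by (simp add: ac_def Pr_def alphaK_def betaK_def falling_Suc)
    next
      case (Suc n')
      have "ac N p (Suc n) n = real (Suc n) * (-p) * (real N - real n)"
        by (simp add: ac_def Pr_def falling_Suc)
      moreover have "ac N p n n' = real n * (-p) * (real N - real n')"
        using Suc by (simp add: ac_def Pr_def falling_Suc)
      moreover have "ac N p (n - 1) k = 0" using 3 Suc by (simp add: ac_zero)
      ultimately show ?thesis using 3 Suc
        by (simp add: alphaK_def algebra_simps)
    qed
  next
    case 4
    define d where "d = n - k - 1"
    have n: "n = k + d + 1" using 4 d_def by simp
    define c0 where "c0 = real ((k+d) choose k)"
    define c1 where "c1 = real ((k+d+1) choose k)"
    define c2 where "c2 = real ((k+d+2) choose k)"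
    define M where "M = real N - real k - real d"
    define q where "q = (-p)^d"
    define P0 where "P0 = Pr N k (k+d)"
    have e0: "ac N p (n-1) k = c0 * q * P0" using n by (simp add: ac_def c0_def q_def P0_def)
    have e1: "ac N p n k = c1 * (-p) * q * P0 * M"
    proof -
      have "Pr N k (Suc (k+d)) = P0 * M" using Pr_Suc[of k "k+d" N] by (simp add: P0_def M_def)
      then show ?thesis using n by (simp add: ac_def c1_def q_def)
    qed
    have e2: "ac N p (Suc n) k = c2 * p^2 * q * P0 * M * (M - 1)"
    proof -
      have A1: "Pr N k (Suc (Suc (k+d))) = Pr N k (Suc (k+d)) * (real N - real (Suc (k+d)))"
        using Pr_Suc[of k "Suc (k+d)" N] by simp
      have A2: "Pr N k (Suc (k+d)) = P0 * M"
        using Pr_Suc[of k "k+d" N] by (simp add: P0_def M_def)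
      have "Pr N k (Suc (Suc (k+d))) = P0 * M * (M - 1)"
        unfolding A1 A2 by (simp add: M_def)
      moreover have "(-p)^(Suc (Suc (k+d)) - k) = p^2 * q"
        by (simp add: q_def Suc_diff_le power2_eq_square)
      ultimately show ?thesis using n by (simp add: ac_def c2_def)
    qed
    have b1: "c1 * (real d + 1) = c0 * (real k + real d + 1)"
    proof -
      have "(k+d+1 - k) * ((k+d+1) choose k) = (k+d+1) * ((k+d+1 - 1) choose k)" by (rule binomial_absorb_comp)
      then have "(d+1) * ((k+d+1) choose k) = (k+d+1) * ((k+d) choose k)" by simp
      then have "real ((d+1) * ((k+d+1) choose k)) = real ((k+d+1) * ((k+d) choose k))" by (rule arg_cong)
      then show ?thesis unfolding c0_def c1_def of_nat_mult by (simp add: algebra_simps)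
    qed
    have b2: "c2 * (real d + 2) = c1 * (real k + real d + 2)"
    proof -
      have "(k+d+2 - k) * ((k+d+2) choose k) = (k+d+2) * ((k+d+2 - 1) choose k)" by (rule binomial_absorb_comp)
      then have "(d+2) * ((k+d+2) choose k) = (k+d+2) * ((k+d+1) choose k)" by simp
      then have "real ((d+2) * ((k+d+2) choose k)) = real ((k+d+2) * ((k+d+1) choose k))" by (rule arg_cong)
      then show ?thesis unfolding c2_def c1_def of_nat_mult by (simp add: algebra_simps)
    qed
    define t where "t = (if k = 0 then 0 else ac N p n (k - 1))"
    have et: "\<exists>c3. t = c3 * p^2 * q * (real N - real k + 1) * P0 * M \<and> c3 * (real d + 2) = c1 * real k"
    proof (cases "k = 0")
      case True then show ?thesis by (simp add: t_def)
    next
      case False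
      define c3 where "c3 = real ((k+d+1) choose (k-1))"
      have "Pr N (k-1) (Suc (k+d)) = (real N - real k + 1) * (P0 * M)"
        using Pr_pred[of k "k+d" N] Pr_Suc[of k "k+d" N] False by (simp add: P0_def M_def)
      moreover have "(-p)^(k + d + 1 - (k - 1)) = p^2 * q"
        using False by (simp add: q_def power2_eq_square)
      ultimately have "t = c3 * p^2 * q * (real N - real k + 1) * P0 * M"
        using n False by (simp add: t_def ac_def c3_def)
      moreover have "c3 * (real d + 2) = c1 * real k"
      proof -
        obtain k' where k': "k = Suc k'" using False by (cases k) auto
        have "Suc k' * ((k+d+1) choose Suc k') = (k+d+1) * ((k+d) choose k')"
          using times_binomial_minus1_eq[of "Suc k'" "k+d+1"] by simp
        moreover have "(k+d+1 - k') * ((k+d+1) choose k') = (k+d+1) * ((k+d) choose k')"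
          using binomial_absorb_comp[of "k+d+1" k'] by simp
        moreover have "k+d+1 - k' = d + 2" using k' by simp
        ultimately have "(d+2) * ((k+d+1) choose k') = Suc k' * ((k+d+1) choose Suc k')" by simp
        then have "real ((d+2) * ((k+d+1) choose k')) = real (Suc k' * ((k+d+1) choose Suc k'))" by (rule arg_cong)
        then have "real (d+2) * c3 = real k * c1" using k' unfolding c3_def c1_def of_nat_mult by simp
        then show ?thesis by (simp add: algebra_simps)
      qed
      ultimately show ?thesis by blast
    qed
    then obtain c3 where t: "t = c3 * p^2 * q * (real N - real k + 1) * P0 * M"
      and b3: "c3 * (real d + 2) = c1 * real k" by blast
    have al: "alphaK N p n = p * M + (real k + real d + 1) * (1 - p) - p"
      using n by (simp add: alphaK_def M_def algebra_simps)
    have be: "betaK N p n = (real k + real d + 1) * p * (1 - p) * M"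
      using n by (simp add: betaK_def M_def algebra_simps)
    have "c2 * p^2 * q * P0 * M * (M - 1) + alphaK N p n * (c1 * (-p) * q * P0 * M) + betaK N p n * (c0 * q * P0)
      = c3 * p^2 * q * (real N - real k + 1) * P0 * M + real k * (c1 * (-p) * q * P0 * M)"
      unfolding al be M_def
      by (rule fin_id) (use b1 b2 b3 in \<open>auto simp: algebra_simps\<close>)
    then show ?thesis using e0 e1 e2 t unfolding t_def by simp
  qed
qed

lemma Kf_less: "n < M \<Longrightarrow> Kf N p n x = (\<Sum>k<M. ac N p n k * falling x k)"
proof -
  assume "n < M"
  then have "{..<M} = {..n} \<union> {n<..<M}" by auto
  then have "(\<Sum>k<M. ac N p n k * falling x k) = (\<Sum>k\<in>{..n} \<union> {n<..<M}. ac N p n k * falling x k)" by simp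
  also have "\<dots> = (\<Sum>k\<le>n. ac N p n k * falling x k) + (\<Sum>k\<in>{n<..<M}. ac N p n k * falling x k)"
    by (rule sum.union_disjoint) auto
  finally have "(\<Sum>k<M. ac N p n k * falling x k) = (\<Sum>k\<le>n. ac N p n k * falling x k) + (\<Sum>k\<in>{n<..<M}. ac N p n k * falling x k)" .
  moreover have "(\<Sum>k\<in>{n<..<M}. ac N p n k * falling x k) = 0" by (simp add: ac_zero)
  ultimately show ?thesis unfolding Kf_def by simp
qed

lemma falling_bdiff: "x * (falling x k - falling (x - 1) k) = real k * falling x k"
proof (cases k)
  case 0 then show ?thesis by simp
next
  case (Suc k')
  have a: "falling (x - 1) k = falling (x - 1) k' * (x - 1 - real k')" by (simp only: Suc falling_Suc)
  have b: "falling x k = x * falling (x - 1) k'" by (simp only: Suc falling_Suc')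
  show ?thesis unfolding a b using Suc by (simp add: algebra_simps)
qed

lemma R1_fun:
  assumes "1 \<le> n"
  shows "x * (Kf N p n x - Kf N p n (x - 1)) = real n * Kf N p n x + real n * p * (real N - real n + 1) * Kf N p (n - 1) x"
proof -
  have "x * (Kf N p n x - Kf N p n (x - 1)) = (\<Sum>k\<le>n. ac N p n k * (x * (falling x k - falling (x - 1) k)))"
    unfolding Kf_def by (simp add: sum_distrib_left sum_subtractf[symmetric] algebra_simps)
  also have "\<dots> = (\<Sum>k\<le>n. (real k * ac N p n k) * falling x k)"
    unfolding falling_bdiff by (simp add: algebra_simps)
  also have "\<dots> = (\<Sum>k\<le>n. (real n * ac N p n k + real n * p * (real N - real n + 1) * ac N p (n - 1) k) * falling x k)"
    using R1_coeff[OF assms] by simp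
  also have "\<dots> = real n * Kf N p n x + real n * p * (real N - real n + 1) * (\<Sum>k\<le>n. ac N p (n - 1) k * falling x k)"
    unfolding Kf_def by (simp add: distrib_right sum.distrib sum_distrib_left mult.assoc)
  also have "(\<Sum>k\<le>n. ac N p (n - 1) k * falling x k) = Kf N p (n - 1) x"
    using Kf_less[of "n - 1" "Suc n" N p x] assms by (simp add: lessThan_Suc_atMost)
  finally show ?thesis .
qed

lemma R2_fun:
  "x * Kf N p n x = Kf N p (Suc n) x + alphaK N p n * Kf N p n x + betaK N p n * Kf N p (n - 1) x"
proof -
  let ?M = "Suc (Suc n)"
  have "x * Kf N p n x = (\<Sum>k<?M. ac N p n k * (x * falling x k))"
    using Kf_less[of n ?M N p x] by (simp add: sum_distrib_left algebra_simps)
  also have "\<dots> = (\<Sum>k<?M. ac N p n k * falling x (Suc k)) + (\<Sum>k<?M. real k * ac N p n k * falling x k)"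
    unfolding sum.distrib[symmetric] by (rule sum.cong) (simp_all add: falling_Suc algebra_simps)
  also have "(\<Sum>k<?M. ac N p n k * falling x (Suc k)) = (\<Sum>k<Suc ?M. (if k = 0 then 0 else ac N p n (k - 1)) * falling x k)"
    by (subst sum.lessThan_Suc_shift) simp
  also have "(\<Sum>k<?M. real k * ac N p n k * falling x k) = (\<Sum>k<Suc ?M. real k * ac N p n k * falling x k)"
    by (simp add: ac_zero)
  finally have "x * Kf N p n x = (\<Sum>k<Suc ?M. ((if k = 0 then 0 else ac N p n (k - 1)) + real k * ac N p n k) * falling x k)"
    by (simp add: sum.distrib algebra_simps)
  also have "\<dots> = (\<Sum>k<Suc ?M. (ac N p (Suc n) k + alphaK N p n * ac N p n k + betaK N p n * ac N p (n - 1) k) * falling x k)"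
    using R2_coeff by simp
  also have "\<dots> = Kf N p (Suc n) x + alphaK N p n * Kf N p n x + betaK N p n * Kf N p (n - 1) x"
    using Kf_less[of "Suc n" "Suc ?M" N p x] Kf_less[of n "Suc ?M" N p x] Kf_less[of "n - 1" "Suc ?M" N p x]
    by (simp add: sum.distrib sum_distrib_left algebra_simps)
  finally show ?thesis .
qed

primrec ffp :: "nat \<Rightarrow> real poly" where
  "ffp 0 = 1"
| "ffp (Suc k) = ffp k * [:- real k, 1:]"

lemma poly_ffp: "poly (ffp k) x = falling x k"
  by (induction k) (simp_all add: falling_Suc algebra_simps)

lemma ffp_deg0: "degree (ffp k) = k \<and> coeff (ffp k) k = 1"
proof (induction k)
  case 0 then show ?case by simp
next
  case (Suc k)
  have nz: "ffp k \<noteq> 0" using Suc by auto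
  have d: "degree (ffp k * [:-real k,1:]) = degree (ffp k) + degree [:-real k,1:]"
    by (rule degree_mult_eq) (use nz in auto)
  have lc: "lead_coeff (ffp k * [:-real k,1:]) = lead_coeff (ffp k) * lead_coeff [:-real k,1:]"
    by (rule lead_coeff_mult)
  have l: "degree [:-real k,1:] = 1" "lead_coeff [:-real k,1:] = 1" by simp_all
  have d2: "degree (ffp k * [:-real k,1:]) = Suc k" using d l Suc.IH by simp
  have "coeff (ffp k * [:-real k,1:]) (Suc k) = lead_coeff (ffp k * [:-real k,1:])" using d2 by simp
  also have "\<dots> = 1" using lc l Suc.IH by simp
  finally have "coeff (ffp k * [:-real k,1:]) (Suc k) = 1" .
  then show ?case using d2 by simp
qed

lemma ffp_deg: "degree (ffp k) = k" "coeff (ffp k) k = 1"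
  using ffp_deg0 by auto

definition KP :: "nat \<Rightarrow> real \<Rightarrow> nat \<Rightarrow> real poly" where
  "KP N p n = (\<Sum>k\<le>n. smult (ac N p n k) (ffp k))"

lemma poly_KP: "poly (KP N p n) x = Kf N p n x"
  by (simp add: KP_def Kf_def poly_sum poly_ffp)

lemma KP_deg: "degree (KP N p n) = n" and KP_lead: "lead_coeff (KP N p n) = 1"
proof -
  have le: "degree (KP N p n) \<le> n" unfolding KP_def
    by (rule degree_sum_le) (auto intro: order.trans[OF degree_smult_le] simp: ffp_deg(1))
  have "coeff (KP N p n) n = (\<Sum>k\<le>n. ac N p n k * coeff (ffp k) n)"
    by (simp add: KP_def coeff_sum)
  also have "\<dots> = (\<Sum>k\<in>{n}. ac N p n k * coeff (ffp k) n)"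
  proof (rule sum.mono_neutral_right)
    show "\<forall>i\<in>{..n} - {n}. ac N p n i * coeff (ffp i) n = 0"
      using ffp_deg(1) by (auto intro!: coeff_eq_0)
  qed auto
  also have "\<dots> = 1" using ffp_deg(2)[of n] by simp
  finally have c: "coeff (KP N p n) n = 1" .
  then have "n \<le> degree (KP N p n)" by (simp add: le_degree)
  with le show "degree (KP N p n) = n" by simp
  with c show "lead_coeff (KP N p n) = 1" by simp
qed

definition Lw :: "nat \<Rightarrow> real \<Rightarrow> (real \<Rightarrow> real) \<Rightarrow> real" where
  "Lw N p f = (\<Sum>x\<le>N. f (real x) * bweight N p x)"

lemma Lw_add: "Lw N p (\<lambda>x. f x + g x) = Lw N p f + Lw N p g"
  by (simp add: Lw_def algebra_simps sum.distrib)
lemma Lw_cmult: "Lw N p (\<lambda>x. c * f x) = c * Lw N p f"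
  by (simp add: Lw_def algebra_simps sum_distrib_left)
lemma Lw_sum: "finite A \<Longrightarrow> Lw N p (\<lambda>x. \<Sum>k\<in>A. f k x) = (\<Sum>k\<in>A. Lw N p (f k))"
  unfolding Lw_def by (simp add: sum_distrib_right sum.swap[of _ A])

lemma falling_fact: "k \<le> x \<Longrightarrow> falling (real x) k * fact (x - k) = fact x"
proof (induction k)
  case 0 then show ?case by simp
next
  case (Suc k)
  have "x - k = Suc (x - Suc k)" using Suc by simp
  then have e: "fact (x - k) = real (x - k) * fact (x - Suc k)" by (simp add: fact_Suc)
  have "falling (real x) (Suc k) * fact (x - Suc k) = falling (real x) k * (real (x - k) * fact (x - Suc k))"
    using Suc.prems by (simp add: falling_Suc of_nat_diff)
  also have "\<dots> = falling (real x) k * fact (x - k)" by (simp add: e)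
  also have "\<dots> = fact x" using Suc by simp
  finally show ?case .
qed

lemma falling_nat_zero: "x < k \<Longrightarrow> falling (real x) k = 0"
  unfolding falling_def by (rule prod_zero) auto

lemma falling_add: "falling z (a + b) = falling z a * falling (z - real a) b"
  by (induction b) (simp_all add: falling_Suc algebra_simps)

lemma mom:
  assumes "0 < p" "p < 1"
  shows "Lw N p (\<lambda>x. falling x k) = falling (real N) k * p ^ k"
proof (cases "k \<le> N")
  case False
  then show ?thesis unfolding Lw_def by (simp add: falling_nat_zero)
next
  case True
  define q where "q = 1 - p"
  have tm: "falling (real x) k * bweight N p x = falling (real N) k * p^k * (real ((N - k) choose (x - k)) * p^(x-k) * q^(N - k - (x - k)))"
    if "k \<le> x" "x \<le> N" for x
  proof -
    have f1: "falling (real x) k = fact x / fact (x - k)" using falling_fact[OF that(1)] by (simp add: field_simps)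
    have f2: "falling (real N) k = fact N / fact (N - k)" using falling_fact[OF True] by (simp add: field_simps)
    have b1: "real (N choose x) = fact N / (fact x * fact (N - x))" using that by (simp add: binomial_fact)
    have "real ((N - k) choose (x - k)) = fact (N - k) / (fact (x - k) * fact ((N - k) - (x - k)))"
      using that by (intro binomial_fact) simp
    moreover have "(N - k) - (x - k) = N - x" using that by simp
    ultimately have b2: "real ((N - k) choose (x - k)) = fact (N - k) / (fact (x - k) * fact (N - x))" by simp
    have pw: "p^x = p^k * p^(x-k)" using that by (simp add: power_add[symmetric])
    have qq: "N - k - (x - k) = N - x" using that by simp
    show ?thesis unfolding bweight_def f1 f2 b1 b2 pw qq q_def by (simp add: field_simps)
  qed
  have "Lw N p (\<lambda>x. falling x k) = (\<Sum>x\<in>{k..N}. falling (real x) k * bweight N p x)"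
    unfolding Lw_def by (rule sum.mono_neutral_right) (auto simp: falling_nat_zero)
  also have "\<dots> = (\<Sum>x\<in>{k..N}. falling (real N) k * p^k * (real ((N - k) choose (x - k)) * p^(x-k) * q^(N - k - (x - k))))"
    by (rule sum.cong) (auto simp: tm)
  also have "\<dots> = (\<Sum>i\<in>{0..N-k}. falling (real N) k * p^k * (real ((N - k) choose i) * p^i * q^(N - k - i)))"
  proof -
    have "{k..N} = {0 + k..(N - k) + k}" using True by simp
    then show ?thesis by (simp only: sum.shift_bounds_cl_nat_ivl) simp
  qed
  also have "\<dots> = falling (real N) k * p^k * (p + q)^(N - k)"
    by (simp add: binomial_ring sum_distrib_left atLeast0AtMost)
  also have "\<dots> = falling (real N) k * p^k" by (simp add: q_def)
  finally show ?thesis .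
qed

lemma Lw_Kf:
  assumes "0 < p" "p < 1" "1 \<le> n"
  shows "Lw N p (Kf N p n) = 0"
proof -
  have "Lw N p (Kf N p n) = (\<Sum>k\<le>n. ac N p n k * (falling (real N) k * p ^ k))"
    using Lw_sum[of "{..n}" N p "\<lambda>k x. ac N p n k * falling x k"] unfolding Kf_def
    by (simp add: Lw_cmult mom[OF assms(1,2)])
  also have "\<dots> = (\<Sum>k\<le>n. falling (real N) n * p^n * (real (n choose k) * 1^k * (-1)^(n-k)))"
  proof (rule sum.cong[OF refl])
    fix k assume "k \<in> {..n}"
    then have k: "k \<le> n" by simp
    have "falling (real N) n = falling (real N) k * Pr N k n"
      using falling_add[of "real N" k "n - k"] k by (simp add: Pr_def)
    moreover have "p^n = p^k * p^(n-k)" using k by (simp add: power_add[symmetric])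
    ultimately show "ac N p n k * (falling (real N) k * p ^ k) = falling (real N) n * p^n * (real (n choose k) * 1^k * (-1)^(n-k))"
      unfolding ac_def by (simp add: power_minus[of p] algebra_simps)
  qed
  also have "\<dots> = falling (real N) n * p^n * (\<Sum>k\<le>n. real (n choose k) * 1^k * (-1)^(n-k))"
    by (simp only: sum_distrib_left)
  also have "\<dots> = falling (real N) n * p^n * (1 + (-1))^n"
    by (simp only: binomial_ring)
  also have "\<dots> = 0" using assms(3) by simp
  finally show ?thesis .
qed

lemma orth_pow:
  assumes "0 < p" "p < 1"
  shows "i < n \<Longrightarrow> Lw N p (\<lambda>x. x^i * Kf N p n x) = 0"
proof (induction i arbitrary: n)
  case 0 then show ?case using Lw_Kf[OF assms, of n] by simp
next
  case (Suc i)
  have "(\<lambda>x. x^Suc i * Kf N p n x) = (\<lambda>x. x^i * Kf N p (Suc n) x + (alphaK N p n * (x^i * Kf N p n x)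
      + betaK N p n * (x^i * Kf N p (n - 1) x)))"
  proof
    fix x
    have "x^Suc i * Kf N p n x = x^i * (x * Kf N p n x)" by simp
    also have "\<dots> = x^i * Kf N p (Suc n) x + (alphaK N p n * (x^i * Kf N p n x)
      + betaK N p n * (x^i * Kf N p (n - 1) x))" unfolding R2_fun by (simp add: algebra_simps)
    finally show "x^Suc i * Kf N p n x = \<dots>" .
  qed
  then show ?case using Suc by (simp add: Lw_add Lw_cmult)
qed

lemma orth_poly:
  assumes "0 < p" "p < 1" "degree q < n"
  shows "Lw N p (\<lambda>x. poly q x * Kf N p n x) = 0"
proof -
  have "(\<lambda>x. poly q x * Kf N p n x) = (\<lambda>x. \<Sum>i\<le>degree q. coeff q i * (x^i * Kf N p n x))"
    by (rule ext) (simp add: poly_altdef sum_distrib_right mult.assoc)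
  then have "Lw N p (\<lambda>x. poly q x * Kf N p n x) = Lw N p (\<lambda>x. \<Sum>i\<le>degree q. coeff q i * (x^i * Kf N p n x))"
    by simp
  also have "\<dots> = (\<Sum>i\<le>degree q. coeff q i * Lw N p (\<lambda>x. x^i * Kf N p n x))"
    by (simp add: Lw_sum Lw_cmult)
  also have "\<dots> = 0" using orth_pow[OF assms(1,2)] assms(3) by simp
  finally show ?thesis .
qed

definition hn :: "nat \<Rightarrow> real \<Rightarrow> nat \<Rightarrow> real" where
  "hn N p k = Lw N p (\<lambda>x. (Kf N p k x)^2)"

lemma bweight_pos: "0 < p \<Longrightarrow> p < 1 \<Longrightarrow> x \<le> N \<Longrightarrow> bweight N p x > 0"
  by (simp add: bweight_def)

lemma Lw_sq_zero:
  assumes "0 < p" "p < 1" "Lw N p (\<lambda>x. (f x)^2) = 0"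
  shows "\<forall>x\<le>N. f (real x) = 0"
proof -
  have nn: "\<forall>x\<in>{..N}. 0 \<le> (f (real x))^2 * bweight N p x"
    using bweight_pos[OF assms(1,2)] by (metis less_imp_le mult_nonneg_nonneg zero_le_power2 atMost_iff)
  have "\<forall>x\<in>{..N}. (f (real x))^2 * bweight N p x = 0"
    using sum_nonneg_eq_0_iff[of "{..N}" "\<lambda>x. (f (real x))^2 * bweight N p x"] nn assms(3)
    unfolding Lw_def by simp
  show ?thesis
  proof (intro allI impI)
    fix x assume x: "x \<le> N"
    then have "(f (real x))^2 * bweight N p x = 0" using \<open>\<forall>x\<in>{..N}. _ = 0\<close> by simp
    moreover have "bweight N p x \<noteq> 0" using bweight_pos[OF assms(1,2) x] by simp
    ultimately show "f (real x) = 0" by simp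
  qed
qed

lemma Lw_sq_nonneg: "0 < p \<Longrightarrow> p < 1 \<Longrightarrow> Lw N p (\<lambda>x. (f x)^2) \<ge> 0"
  unfolding Lw_def using bweight_pos
  by (intro sum_nonneg mult_nonneg_nonneg) (auto intro: less_imp_le)

lemma zero_poly:
  fixes d :: "real poly"
  assumes "\<forall>x\<le>N. poly d (real x) = 0" "degree d \<le> N"
  shows "d = 0"
proof (rule ccontr)
  assume nz: "d \<noteq> 0"
  have "real ` {..N} \<subseteq> {x. poly d x = 0}" using assms(1) by auto
  then have "card (real ` {..N}) \<le> card {x. poly d x = 0}"
    by (rule card_mono[OF poly_roots_finite[OF nz]])
  moreover have "card (real ` {..N}) = Suc N" by (simp add: card_image)
  moreover have "card {x. poly d x = 0} \<le> degree d" by (rule card_poly_roots_bound[OF nz])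
  ultimately show False using assms(2) by simp
qed

context
  fixes N :: nat and p :: real
  assumes p0: "0 < p" and p1: "p < 1"
begin

lemma hn_pos: "k \<le> N \<Longrightarrow> hn N p k > 0"
proof -
  assume k: "k \<le> N"
  have "hn N p k \<ge> 0" unfolding hn_def by (rule Lw_sq_nonneg[OF p0 p1])
  moreover have "hn N p k \<noteq> 0"
  proof
    assume "hn N p k = 0"
    then have "\<forall>x\<le>N. poly (KP N p k) (real x) = 0"
      using Lw_sq_zero[OF p0 p1, of N "Kf N p k"] unfolding hn_def poly_KP by simp
    then have "KP N p k = 0" using zero_poly KP_deg k by simp
    then show False using KP_lead[of N p k] by simp
  qed
  ultimately show ?thesis by simp
qed

lemma orthK: "b < a \<Longrightarrow> Lw N p (\<lambda>x. Kf N p b x * Kf N p a x) = 0"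
  using orth_poly[OF p0 p1, of "KP N p b" a N] by (simp add: poly_KP KP_deg)

lemma orthK': "b < a \<Longrightarrow> Lw N p (\<lambda>x. Kf N p a x * Kf N p b x) = 0"
proof -
  assume "b < a"
  have "(\<lambda>x. Kf N p a x * Kf N p b x) = (\<lambda>x. Kf N p b x * Kf N p a x)" by (simp add: fun_eq_iff mult.commute)
  then show ?thesis using orthK[OF \<open>b < a\<close>] by simp
qed

lemma hn_rec:
  assumes "1 \<le> m"
  shows "hn N p m = betaK N p m * hn N p (m - 1)"
proof -
  have "Lw N p (\<lambda>x. x * Kf N p m x * Kf N p (m-1) x)
      = Lw N p (\<lambda>x. Kf N p m x * Kf N p m x + alphaK N p (m-1) * (Kf N p (m-1) x * Kf N p m x)
          + betaK N p (m-1) * (Kf N p (m - 1 - 1) x * Kf N p m x))"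
  proof -
    have "(\<lambda>x. x * Kf N p m x * Kf N p (m-1) x) = (\<lambda>x. Kf N p m x * Kf N p m x + alphaK N p (m-1) * (Kf N p (m-1) x * Kf N p m x)
          + betaK N p (m-1) * (Kf N p (m - 1 - 1) x * Kf N p m x))"
    proof
      fix x
      have e: "x * Kf N p (m-1) x = Kf N p m x + alphaK N p (m-1) * Kf N p (m-1) x + betaK N p (m-1) * Kf N p (m-1-1) x"
        using R2_fun[of x N p "m-1"] assms by simp
      have "x * Kf N p m x * Kf N p (m-1) x = Kf N p m x * (x * Kf N p (m-1) x)" by simp
      also have "\<dots> = Kf N p m x * (Kf N p m x + alphaK N p (m-1) * Kf N p (m-1) x + betaK N p (m-1) * Kf N p (m-1-1) x)"
        by (simp only: e)
      finally show "x * Kf N p m x * Kf N p (m-1) x = Kf N p m x * Kf N p m x + alphaK N p (m-1) * (Kf N p (m-1) x * Kf N p m x)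
          + betaK N p (m-1) * (Kf N p (m - 1 - 1) x * Kf N p m x)" by (simp add: algebra_simps)
    qed
    then show ?thesis by simp
  qed
  also have "\<dots> = hn N p m"
    using orthK[of "m-1" m] orthK[of "m-1-1" m] assms by (simp add: Lw_add Lw_cmult hn_def power2_eq_square)
  finally have e1: "Lw N p (\<lambda>x. x * Kf N p m x * Kf N p (m-1) x) = hn N p m" .
  have "Lw N p (\<lambda>x. x * Kf N p m x * Kf N p (m-1) x)
      = Lw N p (\<lambda>x. Kf N p (m-1) x * Kf N p (Suc m) x + alphaK N p m * (Kf N p (m-1) x * Kf N p m x)
          + betaK N p m * (Kf N p (m-1) x * Kf N p (m-1) x))"
  proof -
    have "\<And>x. x * Kf N p m x * Kf N p (m-1) x = (x * Kf N p m x) * Kf N p (m-1) x" by simp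
    then show ?thesis unfolding R2_fun by (simp add: algebra_simps)
  qed
  also have "\<dots> = betaK N p m * hn N p (m - 1)"
    using orthK[of "m-1" "Suc m"] orthK[of "m-1" m] assms by (simp add: Lw_add Lw_cmult hn_def power2_eq_square)
  finally show ?thesis using e1 by simp
qed

lemma Kf0: "Kf N p 0 x = 1" by (simp add: Kf_def)
lemma Kf1: "Kf N p (Suc 0) x = x - p * real N"
  by (simp add: Kf_def ac_def Pr_def falling_def)

lemma CD:
  assumes "1 \<le> m" "m \<le> N"
  shows "Kf N p m x * Kf N p (m-1) y - Kf N p (m-1) x * Kf N p m y
     = (x - y) * hn N p (m-1) * (\<Sum>k<m. Kf N p k x * Kf N p k y / hn N p k)"
  using assms
proof (induction m rule: nat_induct_at_least)
  case base
  have "hn N p 0 \<noteq> 0" using hn_pos[of 0] by simp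
  then show ?case by (simp add: Kf0 Kf1)
next
  case (Suc m)
  have mN: "m \<le> N" "m - 1 \<le> N" using Suc by auto
  have hm: "hn N p m \<noteq> 0" "hn N p (m-1) \<noteq> 0" using hn_pos[OF mN(1)] hn_pos[OF mN(2)] by auto
  have IH: "Kf N p m x * Kf N p (m-1) y - Kf N p (m-1) x * Kf N p m y
     = (x - y) * hn N p (m-1) * (\<Sum>k<m. Kf N p k x * Kf N p k y / hn N p k)" using Suc by simp
  have hr: "hn N p m = betaK N p m * hn N p (m-1)" using hn_rec Suc by simp
  have rx: "Kf N p (Suc m) x = x * Kf N p m x - alphaK N p m * Kf N p m x - betaK N p m * Kf N p (m-1) x"
    using R2_fun[of x N p m] by simp
  have ry: "Kf N p (Suc m) y = y * Kf N p m y - alphaK N p m * Kf N p m y - betaK N p m * Kf N p (m-1) y"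
    using R2_fun[of y N p m] by simp
  have "(x - y) * hn N p m * (\<Sum>k<Suc m. Kf N p k x * Kf N p k y / hn N p k)
      = (x - y) * hn N p m * (\<Sum>k<m. Kf N p k x * Kf N p k y / hn N p k) + (x - y) * Kf N p m x * Kf N p m y"
    using hm by (simp add: distrib_left)
  also have "(x - y) * hn N p m * (\<Sum>k<m. Kf N p k x * Kf N p k y / hn N p k)
      = betaK N p m * (Kf N p m x * Kf N p (m-1) y - Kf N p (m-1) x * Kf N p m y)"
    unfolding IH hr by simp
  finally show ?case unfolding rx ry by (simp add: algebra_simps)
qed

lemma expand_exists:
  "degree r < m \<Longrightarrow> \<exists>c. \<forall>x. poly r x = (\<Sum>k<m. c k * Kf N p k x)"
proof (induction m arbitrary: r)
  case 0 then show ?case by simp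
next
  case (Suc m)
  define r' where "r' = r - smult (coeff r m) (KP N p m)"
  have dr: "degree r' \<le> m" unfolding r'_def using Suc.prems
    by (intro degree_diff_le) (auto intro: order.trans[OF degree_smult_le] simp: KP_deg)
  have cr: "coeff r' m = 0" unfolding r'_def using KP_deg[of N p m] KP_lead[of N p m] by simp
  have pr: "\<forall>x. poly r x = poly r' x + coeff r m * Kf N p m x" by (simp add: r'_def poly_KP)
  show ?case
  proof (cases "r' = 0")
    case True
    then show ?thesis using pr
      by (intro exI[of _ "\<lambda>k. if k = m then coeff r m else 0"]) (simp add: if_distrib sum.delta)
  next
    case False
    have "degree r' \<noteq> m" using cr False leading_coeff_0_iff by metis
    then have "degree r' < m" using dr by simp
    then obtain c where c: "\<forall>x. poly r' x = (\<Sum>k<m. c k * Kf N p k x)" using Suc.IH by blast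
    show ?thesis
      by (intro exI[of _ "c(m := coeff r m)"]) (simp add: pr c)
  qed
qed

lemma expand:
  assumes "degree r < m" "m \<le> Suc N"
  shows "poly r x = (\<Sum>k<m. Lw N p (\<lambda>t. poly r t * Kf N p k t) / hn N p k * Kf N p k x)"
proof -
  obtain c where c: "\<forall>x. poly r x = (\<Sum>k<m. c k * Kf N p k x)" using expand_exists[OF assms(1)] by blast
  have co: "Lw N p (\<lambda>t. poly r t * Kf N p i t) / hn N p i = c i" if i: "i < m" for i
  proof -
    have "Lw N p (\<lambda>t. poly r t * Kf N p i t) = (\<Sum>k<m. c k * Lw N p (\<lambda>t. Kf N p k t * Kf N p i t))"
      unfolding c[rule_format] by (simp add: sum_distrib_right Lw_sum Lw_cmult mult.assoc)
    also have "\<dots> = (\<Sum>k\<in>{i}. c k * Lw N p (\<lambda>t. Kf N p k t * Kf N p i t))"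
    proof (rule sum.mono_neutral_right)
      show "\<forall>k\<in>{..<m} - {i}. c k * Lw N p (\<lambda>t. Kf N p k t * Kf N p i t) = 0"
        using orthK orthK' by (auto simp: neq_iff)
    qed (use i in auto)
    also have "\<dots> = c i * hn N p i" by (simp add: hn_def power2_eq_square)
    finally show ?thesis using hn_pos[of i] i assms(2) by simp
  qed
  have "poly r x = (\<Sum>k<m. c k * Kf N p k x)" using c by simp
  also have "\<dots> = (\<Sum>k<m. Lw N p (\<lambda>t. poly r t * Kf N p k t) / hn N p k * Kf N p k x)"
    by (rule sum.cong) (simp_all add: co)
  finally show ?thesis .
qed

end

lemma fdiffs_0[simp]: "fdiffs 0 f = f" by (simp add: fdiffs_def)
lemma fdiffs_Suc: "fdiffs (Suc j) f = fdiff (fdiffs j f)" by (simp add: fdiffs_def)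
lemma fdiffs_Suc_pt: "fdiffs (Suc j) f y = fdiffs j f (y + 1) - fdiffs j f y"
  by (simp add: fdiffs_Suc fdiff_def)

lemma fdiffs_sum: "fdiffs j (\<lambda>x. \<Sum>k\<in>A. f k x) = (\<lambda>x. \<Sum>k\<in>A. fdiffs j (f k) x)"
  by (induction j) (simp_all add: fdiffs_Suc fdiff_def sum_subtractf)

lemma fdiffs_cmult: "fdiffs j (\<lambda>x. c * f x) = (\<lambda>x. c * fdiffs j f x)"
  by (induction j) (simp_all add: fdiffs_Suc fdiff_def algebra_simps)

lemma fdiffs_add: "fdiffs j (\<lambda>x. f x + g x) = (\<lambda>x. fdiffs j f x + fdiffs j g x)"
  by (induction j) (simp_all add: fdiffs_Suc fdiff_def algebra_simps)

lemma fdiffs_diff: "fdiffs j (\<lambda>x. f x - g x) = (\<lambda>x. fdiffs j f x - fdiffs j g x)"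
  by (induction j) (simp_all add: fdiffs_Suc fdiff_def algebra_simps)

lemma fdiffs_lincomb: "fdiffs j (\<lambda>x. \<Sum>k\<in>A. c k * f k x) = (\<lambda>x. \<Sum>k\<in>A. c k * fdiffs j (f k) x)"
  by (simp add: fdiffs_sum fdiffs_cmult)

lemma diff_lin:
  "fdiffs n (\<lambda>y. (x - y) * G y) = (\<lambda>y. (x - y - real n) * fdiffs n G y - real n * fdiffs (n - 1) G y)"
proof (induction n)
  case 0 then show ?case by simp
next
  case (Suc n)
  have key: "real n * (fdiffs (n - 1) G (y + 1) - fdiffs (n - 1) G y) = real n * fdiffs n G y" for y
    by (cases n) (simp_all add: fdiffs_Suc_pt)
  show ?case
  proof
    fix y
    have "fdiffs (Suc n) (\<lambda>y. (x - y) * G y) y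
       = (x - (y + 1) - real n) * fdiffs n G (y + 1) - real n * fdiffs (n - 1) G (y + 1)
         - ((x - y - real n) * fdiffs n G y - real n * fdiffs (n - 1) G y)"
      by (simp add: fdiffs_Suc fdiff_def Suc.IH)
    also have "\<dots> = (x - y - real (Suc n)) * (fdiffs n G (y + 1) - fdiffs n G y) - fdiffs n G y
         - real n * (fdiffs (n - 1) G (y + 1) - fdiffs (n - 1) G y)"
      by (simp add: algebra_simps)
    also have "\<dots> = (x - y - real (Suc n)) * fdiffs (Suc n) G y - real (Suc n) * fdiffs (Suc n - 1) G y"
      unfolding key by (simp add: fdiffs_Suc_pt algebra_simps)
    finally show "fdiffs (Suc n) (\<lambda>y. (x - y) * G y) y = (x - y - real (Suc n)) * fdiffs (Suc n) G y - real (Suc n) * fdiffs (Suc n - 1) G y" .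
  qed
qed

lemma newton_alg:
  fixes a f z G0 G1 J :: real
  assumes "a \<noteq> 0" "1 + J \<noteq> 0"
  shows "f / a * G0 + ((z - (1 + J)) * G1 - (1 + J) * G0) * f / ((1 + J) * a) = f * (z - (1 + J)) / ((1 + J) * a) * G1"
proof -
  have e: "(1+J)*G0*f/((1+J)*a) = f/a*G0" using assms by simp
  have "((z-(1+J))*G1 - (1+J)*G0)*f/((1+J)*a) = (z-(1+J))*G1*f/((1+J)*a) - (1+J)*G0*f/((1+J)*a)"
    by (simp add: left_diff_distrib diff_divide_distrib)
  then show ?thesis unfolding e by simp
qed

lemma newton:
  assumes F: "\<And>y'. F y' = (x - y') * G y'"
  shows "(\<Sum>k\<le>j. fdiffs k F y * falling (x - y) k / fact k) = falling (x - y) (Suc j) / fact j * fdiffs j G y"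
proof -
  have FF: "F = (\<lambda>y'. (x - y') * G y')" using F by (simp add: fun_eq_iff)
  show ?thesis
  proof (induction j)
    case 0 then show ?case by (simp add: FF falling_def)
  next
    case (Suc j)
    have "(\<Sum>k\<le>Suc j. fdiffs k F y * falling (x - y) k / fact k)
      = falling (x - y) (Suc j) / fact j * fdiffs j G y
        + ((x - y - real (Suc j)) * fdiffs (Suc j) G y - real (Suc j) * fdiffs j G y) * falling (x - y) (Suc j) / fact (Suc j)"
      using Suc.IH unfolding FF by (simp add: diff_lin)
    also have "\<dots> = falling (x - y) (Suc (Suc j)) / fact (Suc j) * fdiffs (Suc j) G y"
      unfolding falling_Suc[of _ "Suc j"] fact_Suc of_nat_Suc by (rule newton_alg) simp_all
    finally show ?case .
  qed
qed

context
  fixes N :: nat and p :: real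
  assumes p0: "0 < p" and p1: "p < 1"
begin

lemma kernel_conn:
  assumes "1 \<le> m" "m \<le> N" "falling (x - y) (Suc j) \<noteq> 0"
  shows "(\<Sum>k<m. Kf N p k x * fdiffs j (Kf N p k) y / hn N p k)
     = fact j / (hn N p (m - 1) * falling (x - y) (j + 1)) *
         (\<Sum>k\<le>j. fdiffs k (Kf N p (m - 1)) y / fact k * falling (x - y) k) * Kf N p m x
       + (- (fact j / (hn N p (m - 1) * falling (x - y) (j + 1)) *
         (\<Sum>k\<le>j. fdiffs k (Kf N p m) y / fact k * falling (x - y) k))) * Kf N p (m - 1) x"
proof -
  define G where "G y' = hn N p (m-1) * (\<Sum>k<m. Kf N p k x * Kf N p k y' / hn N p k)" for y'
  define F where "F y' = Kf N p m x * Kf N p (m-1) y' - Kf N p (m-1) x * Kf N p m y'" for y'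
  have FG: "F y' = (x - y') * G y'" for y'
    unfolding F_def G_def using CD[OF p0 p1 assms(1,2)] by simp
  have hpos: "hn N p (m-1) > 0" using hn_pos[OF p0 p1] assms by simp
  have dG: "fdiffs j G y = hn N p (m-1) * (\<Sum>k<m. Kf N p k x * fdiffs j (Kf N p k) y / hn N p k)"
  proof -
    have Geq: "G = (\<lambda>y'. \<Sum>k<m. (hn N p (m-1) * Kf N p k x / hn N p k) * Kf N p k y')"
      unfolding G_def by (simp add: fun_eq_iff sum_distrib_left algebra_simps)
    have "fdiffs j G y = (\<Sum>k<m. (hn N p (m-1) * Kf N p k x / hn N p k) * fdiffs j (Kf N p k) y)"
      unfolding Geq fdiffs_lincomb by (rule refl)
    then show ?thesis by (simp add: sum_distrib_left mult.assoc)
  qed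
  have dF: "fdiffs k F y = Kf N p m x * fdiffs k (Kf N p (m-1)) y - Kf N p (m-1) x * fdiffs k (Kf N p m) y" for k
  proof -
    have "F = (\<lambda>y'. Kf N p m x * Kf N p (m-1) y' - Kf N p (m-1) x * Kf N p m y')" unfolding F_def by simp
    then show ?thesis by (simp add: fdiffs_diff fdiffs_cmult)
  qed
  have "(\<Sum>k\<le>j. fdiffs k F y * falling (x - y) k / fact k) = falling (x - y) (Suc j) / fact j * fdiffs j G y"
    by (rule newton[OF FG])
  moreover have "(\<Sum>k\<le>j. fdiffs k F y * falling (x - y) k / fact k)
      = Kf N p m x * (\<Sum>k\<le>j. fdiffs k (Kf N p (m - 1)) y / fact k * falling (x - y) k)
      - Kf N p (m - 1) x * (\<Sum>k\<le>j. fdiffs k (Kf N p m) y / fact k * falling (x - y) k)"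
    unfolding dF sum_distrib_left sum_subtractf[symmetric] by (rule sum.cong) (simp_all add: field_simps)
  ultimately have "Kf N p m x * (\<Sum>k\<le>j. fdiffs k (Kf N p (m - 1)) y / fact k * falling (x - y) k)
      - Kf N p (m - 1) x * (\<Sum>k\<le>j. fdiffs k (Kf N p m) y / fact k * falling (x - y) k)
      = falling (x - y) (Suc j) / fact j * hn N p (m-1) * (\<Sum>k<m. Kf N p k x * fdiffs j (Kf N p k) y / hn N p k)"
    unfolding dG by simp
  then show ?thesis using assms(3) hpos
    by (simp add: field_simps)
qed

end

definition dd :: "nat \<Rightarrow> real \<Rightarrow> nat \<Rightarrow> nat \<Rightarrow> real \<Rightarrow> real" where
  "dd N p j k y = fdiffs j (Kf N p k) y"
definition kk :: "nat \<Rightarrow> real \<Rightarrow> nat \<Rightarrow> nat \<Rightarrow> real \<Rightarrow> real \<Rightarrow> real" where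
  "kk N p j m a b = (\<Sum>k<m. dd N p j k a * dd N p j k b / hn N p k)"
definition Pker :: "nat \<Rightarrow> real \<Rightarrow> nat \<Rightarrow> nat \<Rightarrow> real \<Rightarrow> real poly" where
  "Pker N p j m y = (\<Sum>k<m. smult (dd N p j k y / hn N p k) (KP N p k))"

lemma delta_alg:
  fixes lam mu a d s :: real
  assumes "lam > 0" "mu > 0" "a \<ge> 0" "d \<ge> 0" "s^2 \<le> a * d"
  shows "(1 + lam * a) * (1 + mu * d) - lam * mu * s * s > 0"
proof -
  have "(1 + lam * a) * (1 + mu * d) - lam * mu * s * s = 1 + lam * a + mu * d + lam * mu * (a * d - s^2)"
    by (simp add: algebra_simps power2_eq_square)
  moreover have "lam * mu * (a * d - s^2) \<ge> 0" using assms by simp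
  moreover have "lam * a \<ge> 0" "mu * d \<ge> 0" using assms by simp_all
  ultimately show ?thesis by linarith
qed

lemma system_alg:
  fixes lam mu a d s d0 dN \<delta> :: real
  assumes "\<delta> = (1 + lam * a) * (1 + mu * d) - lam * mu * s * s" "\<delta> \<noteq> 0"
  shows "d0 - lam * ((d0 * (1 + mu * d) - mu * s * dN) / \<delta>) * a - mu * (((1 + lam * a) * dN - lam * s * d0) / \<delta>) * s
           = (d0 * (1 + mu * d) - mu * s * dN) / \<delta>"
    and "dN - lam * ((d0 * (1 + mu * d) - mu * s * dN) / \<delta>) * s - mu * (((1 + lam * a) * dN - lam * s * d0) / \<delta>) * d
           = ((1 + lam * a) * dN - lam * s * d0) / \<delta>"
  using assms apply (simp_all add: field_simps) by algebra+

context
  fixes N :: nat and p :: real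
  assumes p0: "0 < p" and p1: "p < 1"
begin

lemma Kraw_eq: "k \<le> N \<Longrightarrow> Kraw N p k = Kf N p k"
  using Kraw_Kf[of p k N] p0 by (simp add: fun_eq_iff)

lemma Knorm2_eq: "k \<le> N \<Longrightarrow> Knorm2 N p k = hn N p k"
  by (simp add: Knorm2_def hn_def Lw_def Kraw_eq)

lemma kern_eq: "m \<le> N \<Longrightarrow> kern N p m j j a b = kk N p j m a b"
  unfolding kern_def kk_def dd_def by (rule sum.cong) (auto simp: Kraw_eq Knorm2_eq)

lemma kk_sym: "kk N p j m a b = kk N p j m b a"
  unfolding kk_def by (simp add: mult.commute)

lemma kk_CS: "m \<le> N \<Longrightarrow> (kk N p j m a b)^2 \<le> kk N p j m a a * kk N p j m b b \<and> kk N p j m a a \<ge> 0"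
proof -
  assume m: "m \<le> N"
  have h: "k < m \<Longrightarrow> hn N p k > 0" for k using hn_pos[OF p0 p1, of k] m by simp
  define u where "u k = dd N p j k a / sqrt (hn N p k)" for k
  define v where "v k = dd N p j k b / sqrt (hn N p k)" for k
  have e1: "kk N p j m a b = (\<Sum>k<m. u k * v k)"
    unfolding kk_def u_def v_def by (rule sum.cong) (auto simp: h less_imp_le real_sqrt_mult[symmetric])
  have e2: "kk N p j m a a = (\<Sum>k<m. (u k)^2)"
    unfolding kk_def u_def by (rule sum.cong) (auto simp: h less_imp_le power_divide power2_eq_square)
  have e3: "kk N p j m b b = (\<Sum>k<m. (v k)^2)"
    unfolding kk_def v_def by (rule sum.cong) (auto simp: h less_imp_le power_divide power2_eq_square)
  show ?thesis unfolding e1 e2 e3 by (simp add: Cauchy_Schwarz_ineq_sum sum_nonneg)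
qed

lemma poly_Pker: "poly (Pker N p j m y) x = (\<Sum>k<m. dd N p j k y / hn N p k * Kf N p k x)"
  by (simp add: Pker_def poly_sum poly_KP)

lemma fdiffs_Pker: "fdiffs j (poly (Pker N p j m y)) z = kk N p j m y z"
proof -
  have e: "poly (Pker N p j m y) = (\<lambda>x. \<Sum>k<m. (dd N p j k y / hn N p k) * Kf N p k x)"
    by (simp add: fun_eq_iff poly_Pker)
  show ?thesis unfolding e fdiffs_lincomb kk_def by (rule sum.cong) (simp_all add: dd_def)
qed

lemma Lw_Pker:
  assumes "degree r < m" "m \<le> N"
  shows "Lw N p (\<lambda>t. poly (Pker N p j m y) t * poly r t) = fdiffs j (poly r) y"
proof -
  have e: "poly r = (\<lambda>x. \<Sum>k<m. (Lw N p (\<lambda>t. poly r t * Kf N p k t) / hn N p k) * Kf N p k x)"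
    using expand[OF p0 p1 assms(1)] assms(2) by (simp add: fun_eq_iff)
  have "fdiffs j (poly r) y = (\<Sum>k<m. Lw N p (\<lambda>t. poly r t * Kf N p k t) / hn N p k * dd N p j k y)"
    by (subst e, unfold fdiffs_lincomb) (simp add: dd_def)
  moreover have "Lw N p (\<lambda>t. poly (Pker N p j m y) t * poly r t) = (\<Sum>k<m. dd N p j k y / hn N p k * Lw N p (\<lambda>t. poly r t * Kf N p k t))"
  proof -
    have e2: "(\<lambda>t. poly (Pker N p j m y) t * poly r t) = (\<lambda>t. \<Sum>k<m. (dd N p j k y / hn N p k) * (poly r t * Kf N p k t))"
      unfolding poly_Pker by (rule ext) (simp add: sum_distrib_right sum_distrib_left algebra_simps)
    show ?thesis unfolding e2 Lw_sum[OF finite_lessThan] Lw_cmult ..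
  qed
  ultimately show ?thesis by (simp add: mult.commute)
qed

lemma Pker_deg: "1 \<le> m \<Longrightarrow> degree (Pker N p j m y) < m"
proof -
  assume "1 \<le> m"
  have "degree (Pker N p j m y) \<le> m - 1" unfolding Pker_def
    by (rule degree_sum_le) (auto intro: order.trans[OF degree_smult_le] simp: KP_deg)
  then show ?thesis using \<open>1 \<le> m\<close> by simp
qed

end

lemma S4_alg:
  fixes x E F K K1 K2 al be :: real
  assumes "x*K1 = K + al*K1 + be*K2" "be \<noteq> 0"
  shows "E*K1 + F*K2 = (- F / be)*K + (E + (- F / be)*(al - x))*K1"
proof -
  have K2: "K2 = ((x - al)*K1 - K)/be" using assms(1,2) by (simp add: field_simps)
  have FK: "F*K2 = F*(x - al)/be*K1 - F/be*K" unfolding K2 by (simp add: diff_divide_distrib add_divide_distrib algebra_simps)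
  show ?thesis unfolding FK by (simp add: algebra_simps add_divide_distrib[symmetric])
qed

lemma S3_alg:
  fixes x c c' d d' K K1 K2 Km' K1' m N p al be :: real
  assumes "x*(K - Km') = m*K + m*p*(N - m + 1)*K1"
    "x*(K1 - K1') = (m - 1)*K1 + (m - 1)*p*(N - (m - 1) + 1)*K2"
    "x*K1 = K + al*K1 + be*K2" "be \<noteq> 0"
  shows "x*((c*K + d*K1) - (c'*Km' + d'*K1')) = (x*(c - c') + m*c' - (m - 1)*p*(N - m + 2)*d' / be)*K
     + (x*(d - d') + m*p*(N - m + 1)*c' + (m - 1)*p*(N - m + 2)*(x - al)*d' / be + (m - 1)*d')*K1"
proof -
  define Z where "Z = (m - 1)*p*(N - m + 2)*d'"
  have K2: "K2 = ((x - al)*K1 - K)/be" using assms(3,4) by (simp add: field_simps)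
  have ZK: "Z*K2 = Z*(x - al)/be*K1 - Z/be*K" unfolding K2 by (simp add: diff_divide_distrib add_divide_distrib algebra_simps)
  have "x*((c*K + d*K1) - (c'*Km' + d'*K1')) = x*(c - c')*K + x*(d - d')*K1 + c'*(x*(K - Km')) + d'*(x*(K1 - K1'))"
    by (simp add: algebra_simps)
  also have "\<dots> = x*(c - c')*K + x*(d - d')*K1 + c'*(m*K + m*p*(N - m + 1)*K1) + d'*((m - 1)*K1) + Z*K2"
    unfolding assms(1,2) Z_def by (simp add: algebra_simps)
  also have "\<dots> = x*(c - c')*K + x*(d - d')*K1 + c'*(m*K + m*p*(N - m + 1)*K1) + d'*((m - 1)*K1) + (Z*(x - al)/be*K1 - Z/be*K)"
    unfolding ZK ..
  also have "\<dots> = (x*(c - c') + m*c' - Z / be)*K + (x*(d - d') + m*p*(N - m + 1)*c' + Z*(x - al) / be + (m - 1)*d')*K1"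
    by (simp add: algebra_simps)
  finally show ?thesis unfolding Z_def by (simp add: mult.commute mult.left_commute)
qed

definition Qp :: "nat \<Rightarrow> real \<Rightarrow> real \<Rightarrow> real \<Rightarrow> nat \<Rightarrow> nat \<Rightarrow> real poly" where
  "Qp N p lam mu j m = KP N p m - smult (lam * Phi1 N p lam mu j m) (Pker N p j m 0)
     - smult (mu * Phi2 N p lam mu j m) (Pker N p j m (real N))"

lemma falling_nonint: "x \<notin> \<int> \<Longrightarrow> falling (x - real y) k \<noteq> 0"
  unfolding falling_def
proof
  assume nx: "x \<notin> \<int>" and "(\<Prod>i<k. x - real y - real i) = 0"
  then obtain i where "x - real y - real i = 0" by auto
  then have "x = real (y + i)" by simp
  then show False using nx by (metis Ints_of_nat)
qed

lemma Lw_diff: "Lw N p (\<lambda>x. f x - g x) = Lw N p f - Lw N p g"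
  by (simp add: Lw_def algebra_simps sum_subtractf)

lemma sip_Lw: "sip N p lam mu j f g = Lw N p (\<lambda>t. poly f t * poly g t)
   + lam * fdiffs j (poly f) 0 * fdiffs j (poly g) 0 + mu * fdiffs j (poly f) (real N) * fdiffs j (poly g) (real N)"
  by (simp add: sip_def Lw_def)

lemma sip_diff: "sip N p lam mu j (q1 - q2) r = sip N p lam mu j q1 r - sip N p lam mu j q2 r"
proof -
  have e: "poly (q1 - q2) = (\<lambda>x. poly q1 x - poly q2 x)" by (simp add: fun_eq_iff)
  have e2: "(\<lambda>t. (poly q1 t - poly q2 t) * poly r t) = (\<lambda>t. poly q1 t * poly r t - poly q2 t * poly r t)"
    by (simp add: fun_eq_iff algebra_simps)
  show ?thesis unfolding sip_Lw e e2 fdiffs_diff Lw_diff by (simp add: algebra_simps)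
qed

context
  fixes N :: nat and p lam mu :: real and j :: nat
  assumes p0: "0 < p" and p1: "p < 1" and lam0: "lam > 0" and mu0: "mu > 0"
begin

lemma Phi_kk:
  assumes "m \<le> N"
  shows "deltaS N p lam mu j m = (1 + lam * kk N p j m 0 0) * (1 + mu * kk N p j m (real N) (real N))
           - lam * mu * kk N p j m 0 (real N) * kk N p j m 0 (real N)"
    "Phi1 N p lam mu j m = (dd N p j m 0 * (1 + mu * kk N p j m (real N) (real N)) - mu * kk N p j m 0 (real N) * dd N p j m (real N))
        / deltaS N p lam mu j m"
    "Phi2 N p lam mu j m = ((1 + lam * kk N p j m 0 0) * dd N p j m (real N) - lam * kk N p j m 0 (real N) * dd N p j m 0)
        / deltaS N p lam mu j m"
  using assms
  by (simp_all add: deltaS_def Phi1_def Phi2_def kern_eq[OF p0 p1] kk_sym[OF p0 p1, where N=N and j=j and m=m and a="real N" and b=0] dd_def Kraw_eq[OF p0 p1])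

lemma delta_pos: "m \<le> N \<Longrightarrow> deltaS N p lam mu j m > 0"
  unfolding Phi_kk(1)
  by (rule delta_alg[OF lam0 mu0]) (use kk_CS[OF p0 p1, where N=N and m=m and j=j and a=0 and b="real N"] kk_CS[OF p0 p1, where N=N and m=m and j=j and a="real N" and b=0] in auto)

lemma poly_Qp: "poly (Qp N p lam mu j m) = (\<lambda>x. (Kf N p m x - (lam * Phi1 N p lam mu j m) * poly (Pker N p j m 0) x)
     - (mu * Phi2 N p lam mu j m) * poly (Pker N p j m (real N)) x)"
  by (simp add: fun_eq_iff Qp_def poly_KP)

lemma fdiffs_Q: "fdiffs j (poly (Qp N p lam mu j m)) z = dd N p j m z - lam * Phi1 N p lam mu j m * kk N p j m 0 z
      - mu * Phi2 N p lam mu j m * kk N p j m (real N) z"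
  unfolding poly_Qp fdiffs_diff fdiffs_cmult by (simp add: fdiffs_Pker[OF p0 p1] dd_def)

lemma Q_sys:
  assumes "m \<le> N"
  shows "fdiffs j (poly (Qp N p lam mu j m)) 0 = Phi1 N p lam mu j m"
    "fdiffs j (poly (Qp N p lam mu j m)) (real N) = Phi2 N p lam mu j m"
proof -
  have dz: "deltaS N p lam mu j m \<noteq> 0" using delta_pos[OF assms] by simp
  show "fdiffs j (poly (Qp N p lam mu j m)) 0 = Phi1 N p lam mu j m"
    unfolding fdiffs_Q kk_sym[OF p0 p1, where N=N and j=j and m=m and a="real N" and b=0] Phi_kk(2,3)[OF assms]
    by (rule system_alg(1)[OF Phi_kk(1)[OF assms] dz])
  show "fdiffs j (poly (Qp N p lam mu j m)) (real N) = Phi2 N p lam mu j m"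
    unfolding fdiffs_Q Phi_kk(2,3)[OF assms]
    by (rule system_alg(2)[OF Phi_kk(1)[OF assms] dz])
qed

lemma Q_orth:
  assumes "m \<le> N" "degree r < m"
  shows "sip N p lam mu j (Qp N p lam mu j m) r = 0"
proof -
  have L: "Lw N p (\<lambda>t. poly (Qp N p lam mu j m) t * poly r t)
     = - lam * Phi1 N p lam mu j m * fdiffs j (poly r) 0 - mu * Phi2 N p lam mu j m * fdiffs j (poly r) (real N)"
  proof -
    have e: "(\<lambda>t. poly (Qp N p lam mu j m) t * poly r t) = (\<lambda>t. (poly r t * Kf N p m t
        - (lam * Phi1 N p lam mu j m) * (poly (Pker N p j m 0) t * poly r t))
        - (mu * Phi2 N p lam mu j m) * (poly (Pker N p j m (real N)) t * poly r t))"
      unfolding poly_Qp by (simp add: fun_eq_iff algebra_simps)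
    have o: "Lw N p (\<lambda>t. poly r t * Kf N p m t) = 0" by (rule orth_poly[OF p0 p1 assms(2)])
    show ?thesis unfolding e Lw_diff Lw_cmult o Lw_Pker[OF p0 p1 assms(2,1)] by simp
  qed
  show ?thesis unfolding sip_Lw L Q_sys[OF assms(1)] by simp
qed

lemma Q_deg:
  assumes "1 \<le> m"
  shows "degree (Qp N p lam mu j m) = m" "coeff (Qp N p lam mu j m) m = 1"
proof -
  have d0: "degree (Pker N p j m 0) < m" "degree (Pker N p j m (real N)) < m" using Pker_deg[OF p0 p1] assms by auto
  have le: "degree (Qp N p lam mu j m) \<le> m" unfolding Qp_def
    using d0 by (intro degree_diff_le) (auto simp: KP_deg intro: order.trans[OF degree_smult_le] less_imp_le)
  have c: "coeff (Qp N p lam mu j m) m = 1"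
    unfolding Qp_def using d0 KP_deg[of N p m] KP_lead[of N p m] by (simp add: coeff_eq_0)
  then have "m \<le> degree (Qp N p lam mu j m)" by (simp add: le_degree)
  with le show "degree (Qp N p lam mu j m) = m" by simp
  show "coeff (Qp N p lam mu j m) m = 1" by (rule c)
qed

lemma sip_self_zero:
  assumes "sip N p lam mu j e e = 0"
  shows "\<forall>x\<le>N. poly e (real x) = 0"
proof -
  have a: "Lw N p (\<lambda>t. (poly e t)^2) \<ge> 0" by (rule Lw_sq_nonneg[OF p0 p1])
  have b: "lam * fdiffs j (poly e) 0 * fdiffs j (poly e) 0 \<ge> 0"
    by (metis lam0 less_imp_le mult.assoc mult_nonneg_nonneg zero_le_square)
  have c: "mu * fdiffs j (poly e) (real N) * fdiffs j (poly e) (real N) \<ge> 0"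
    by (metis mu0 less_imp_le mult.assoc mult_nonneg_nonneg zero_le_square)
  have "Lw N p (\<lambda>t. (poly e t)^2) = 0" using assms a b c unfolding sip_Lw power2_eq_square by linarith
  then show ?thesis by (rule Lw_sq_zero[OF p0 p1])
qed

lemma SobK_eq:
  assumes "1 \<le> m" "m \<le> N"
  shows "SobK N p lam mu j m = Qp N p lam mu j m"
  unfolding SobK_def
proof (rule the_equality)
  show "degree (Qp N p lam mu j m) = m \<and> lead_coeff (Qp N p lam mu j m) = 1 \<and>
      (\<forall>r. degree r < m \<longrightarrow> sip N p lam mu j (Qp N p lam mu j m) r = 0)"
    using Q_deg[OF assms(1)] Q_orth[OF assms(2)] by simp
next
  fix q assume q: "degree q = m \<and> lead_coeff q = 1 \<and> (\<forall>r. degree r < m \<longrightarrow> sip N p lam mu j q r = 0)"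
  define e where "e = q - Qp N p lam mu j m"
  show "q = Qp N p lam mu j m"
  proof (cases "e = 0")
    case True then show ?thesis by (simp add: e_def)
  next
    case False
    from q have dq: "degree q = m" and lq: "lead_coeff q = 1" by auto
    have cq: "coeff q m = 1" using lq dq by metis
    have ce: "coeff e m = 0" using cq Q_deg[OF assms(1)] by (simp add: e_def)
    have de: "degree e \<le> m" unfolding e_def using q Q_deg[OF assms(1)] by (intro degree_diff_le) auto
    have "degree e \<noteq> m" using ce False leading_coeff_0_iff by metis
    then have dlt: "degree e < m" using de by simp
    have "sip N p lam mu j e e = sip N p lam mu j q e - sip N p lam mu j (Qp N p lam mu j m) e"
      unfolding e_def by (rule sip_diff)
    also have "\<dots> = 0" using q dlt Q_orth[OF assms(2) dlt] by simp
    finally have "\<forall>x\<le>N. poly e (real x) = 0" by (rule sip_self_zero)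
    then have "e = 0" using zero_poly dlt assms(2) by simp
    with False show ?thesis by simp
  qed
qed

lemma Pker_conn:
  assumes "1 \<le> m" "m \<le> N" "x \<notin> \<int>"
  shows "poly (Pker N p j m (real y)) x = Acal N p j m x (real y) * Kf N p m x + Bcal N p j m x (real y) * Kf N p (m - 1) x"
proof -
  have "poly (Pker N p j m (real y)) x = (\<Sum>k<m. Kf N p k x * fdiffs j (Kf N p k) (real y) / hn N p k)"
    unfolding poly_Pker[OF p0 p1] dd_def by (rule sum.cong) auto
  also note kernel_conn[OF p0 p1 assms(1,2) falling_nonint[OF assms(3), of y "Suc j"]]
  finally show ?thesis
    unfolding Acal_def Bcal_def using assms(1,2)
    by (simp add: Knorm2_eq[OF p0 p1] Kraw_eq[OF p0 p1])
qed

lemma conn: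
  assumes "1 \<le> m" "m \<le> N" "x \<notin> \<int>"
  shows "poly (Qp N p lam mu j m) x = C1 N p lam mu j m x * Kf N p m x + D1 N p lam mu j m x * Kf N p (m - 1) x"
proof -
  have P0: "poly (Pker N p j m 0) x = Acal N p j m x 0 * Kf N p m x + Bcal N p j m x 0 * Kf N p (m - 1) x"
    using Pker_conn[OF assms, of 0] by simp
  have PN: "poly (Pker N p j m (real N)) x = Acal N p j m x (real N) * Kf N p m x + Bcal N p j m x (real N) * Kf N p (m - 1) x"
    using Pker_conn[OF assms, of N] by simp
  show ?thesis unfolding poly_Qp P0 PN C1_def D1_def by (simp add: algebra_simps)
qed

lemma S3:
  assumes "2 \<le> m" "m \<le> N" "x \<notin> \<int>"
  shows "x * bdiff (poly (SobK N p lam mu j m)) x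
     = E1 N p lam mu j m x * Kraw N p m x + F1 N p lam mu j m x * Kraw N p (m - 1) x"
proof -
  have x1: "x - 1 \<notin> \<int>"
  proof
    assume "x - 1 \<in> \<int>"
    then have "x - 1 + 1 \<in> \<int>" by (intro Ints_add) auto
    with assms(3) show False by simp
  qed
  have m1: "1 \<le> m" using assms by simp
  have sob: "poly (SobK N p lam mu j m) = poly (Qp N p lam mu j m)" using SobK_eq[OF m1 assms(2)] by simp
  have cx: "poly (Qp N p lam mu j m) x = C1 N p lam mu j m x * Kf N p m x + D1 N p lam mu j m x * Kf N p (m - 1) x"
    by (rule conn[OF m1 assms(2,3)])
  have cx1: "poly (Qp N p lam mu j m) (x - 1) = C1 N p lam mu j m (x - 1) * Kf N p m (x - 1) + D1 N p lam mu j m (x - 1) * Kf N p (m - 1) (x - 1)"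
    by (rule conn[OF m1 assms(2) x1])
  have r1: "x * (Kf N p m x - Kf N p m (x - 1)) = real m * Kf N p m x + real m * p * (real N - real m + 1) * Kf N p (m - 1) x"
    by (rule R1_fun[OF m1])
  have r1': "x * (Kf N p (m - 1) x - Kf N p (m - 1) (x - 1)) = (real m - 1) * Kf N p (m - 1) x
      + (real m - 1) * p * (real N - (real m - 1) + 1) * Kf N p (m - 2) x"
    using R1_fun[of "m - 1" x N p] assms(1) by (simp add: of_nat_diff numeral_2_eq_2)
  have r2: "x * Kf N p (m - 1) x = Kf N p m x + alphaK N p (m - 1) * Kf N p (m - 1) x + betaK N p (m - 1) * Kf N p (m - 2) x"
    using R2_fun[of x N p "m - 1"] assms(1) by (simp add: numeral_2_eq_2)
  have bnz: "betaK N p (m - 1) \<noteq> 0"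
    using assms p0 p1 by (simp add: betaK_def of_nat_diff)
  have km: "Kraw N p m = Kf N p m" "Kraw N p (m - 1) = Kf N p (m - 1)" using Kraw_eq[OF p0 p1] assms(2) by auto
  show ?thesis
    unfolding sob bdiff_def cx cx1 E1_def F1_def km
    by (rule S3_alg[OF r1 r1' r2 bnz])
qed

end

theorem mainTheorem5:
  fixes N j n :: nat and p lam mu :: real
  assumes "0 < p" "p < 1" "lam > 0" "mu > 0" "3 \<le> n" "n \<le> N"
  shows "\<forall>x::real. x \<notin> \<int> \<longrightarrow>
    x * bdiff (poly (SobK N p lam mu j n)) x
      = E1 N p lam mu j n x * Kraw N p n x + F1 N p lam mu j n x * Kraw N p (n - 1) x
    \<and> x * bdiff (poly (SobK N p lam mu j (n - 1))) x
      = E2 N p lam mu j n x * Kraw N p n x + F2 N p lam mu j n x * Kraw N p (n - 1) x"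
proof (intro allI impI conjI)
  fix x :: real assume x: "x \<notin> \<int>"
  show "x * bdiff (poly (SobK N p lam mu j n)) x
      = E1 N p lam mu j n x * Kraw N p n x + F1 N p lam mu j n x * Kraw N p (n - 1) x"
    by (rule S3[OF assms(1-4) _ assms(6) x]) (use assms(5) in simp)
  have a: "x * bdiff (poly (SobK N p lam mu j (n - 1))) x
      = E1 N p lam mu j (n - 1) x * Kraw N p (n - 1) x + F1 N p lam mu j (n - 1) x * Kraw N p (n - 1 - 1) x"
    by (rule S3[OF assms(1-4) _ _ x]) (use assms(5,6) in simp_all)
  have r2: "x * Kraw N p (n - 1) x = Kraw N p n x + alphaK N p (n - 1) * Kraw N p (n - 1) x + betaK N p (n - 1) * Kraw N p (n - 1 - 1) x"
    using R2_fun[of x N p "n - 1"] assms(5,6) Kraw_eq[OF assms(1,2), of n] Kraw_eq[OF assms(1,2), of "n - 1"]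
      Kraw_eq[OF assms(1,2), of "n - 1 - 1"] by simp
  have bnz: "betaK N p (n - 1) \<noteq> 0"
    using assms by (simp add: betaK_def of_nat_diff)
  show "x * bdiff (poly (SobK N p lam mu j (n - 1))) x
      = E2 N p lam mu j n x * Kraw N p n x + F2 N p lam mu j n x * Kraw N p (n - 1) x"
    unfolding a F2_def E2_def by (rule S4_alg[OF r2 bnz])
qed

end
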